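(* Let $n,l$ be integers with $1\le l\le n-1$ and set $b=l/n$. Let $S_{\mathrm{Indep}}\sim\mathrm{Bin}(n,b)$, and let $S_{\mathrm{Fixed},1}$ be the number of elements of $\{1,\dots,n\}$ contained in a uniformly random $2l$-element subset of $\{1,\dots,2n\}$, i.e. $\Pr(S_{\mathrm{Fixed},1}=k)=\binom{2l}{k}\binom{2n-2l}{n-k}/\binom{2n}{n}$. Then for every integer $k$ with $0\le k\le n$, \[ \frac{\Pr(S_{\mathrm{Fixed},1}=k)}{\Pr(S_{\mathrm{Indep}}=k)}\le 2. \]
   Context: Binomial coefficients $\binom{a}{k}$ are $0$ when $k<0$ or $k>a$. *)

theory Defs
  imports "HOL-Probability.Probability"
begin

definition fixed_prob :: "nat \<Rightarrow> nat \<Rightarrow> nat \<Rightarrow> real" where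
  "fixed_prob n l k =
     real ((2*l) choose k) * real ((2*n - 2*l) choose (n - k)) / real ((2*n) choose n)"

end

theory Submission imports Defs begin

definition P :: "nat \<Rightarrow> nat \<Rightarrow> real" where "P a k = (\<Prod>i<k. real a - real i)"
definition Q :: "nat \<Rightarrow> nat \<Rightarrow> real" where "Q m a = P (2*m) a / real m ^ a"

lemma choose_P: "real (a choose k) = P a k / fact k"
  by (simp add: binomial_gbinomial gbinomial_prod_rev P_def atLeast0LessThan)

lemma Q_Suc: "m \<ge> 1 \<Longrightarrow> Q m (Suc a) = Q m a * ((2*real m - real a) / real m)"
  by (simp add: Q_def P_def field_simps)

lemma P_zero: "a < k \<Longrightarrow> P a k = 0"
  unfolding P_def by (rule prod_zero) (auto intro: bexI[of _ a])

lemma Q_nonneg: "m \<ge> 1 \<Longrightarrow> Q m a \<ge> 0"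
proof (cases "a \<le> 2*m")
  case True
  then have "P (2*m) a \<ge> 0" unfolding P_def by (intro prod_nonneg) auto
  then show ?thesis by (simp add: Q_def)
next
  case False
  then show ?thesis by (simp add: Q_def P_zero)
qed

lemma Q_inc: "m \<ge> 1 \<Longrightarrow> a < m \<Longrightarrow> Q m a \<le> Q m (Suc a)"
proof -
  assume m: "m \<ge> 1" and a: "a < m"
  have "1 \<le> (2*real m - real a) / real m" using m a by (simp add: field_simps)
  then have "Q m a * 1 \<le> Q m a * ((2*real m - real a) / real m)"
    using Q_nonneg[OF m, of a] by (rule mult_left_mono)
  then show ?thesis using Q_Suc[OF m, of a] by simp
qed

lemma Q_dec: "m \<ge> 1 \<Longrightarrow> m \<le> a \<Longrightarrow> Q m (Suc a) \<le> Q m a"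
proof -
  assume m: "m \<ge> 1" and a: "m \<le> a"
  show ?thesis
  proof (cases "a \<le> 2*m")
    case True
    have "(2*real m - real a) / real m \<le> 1" "0 \<le> (2*real m - real a) / real m"
      using m a True by (simp_all add: field_simps)
    then have "Q m a * ((2*real m - real a) / real m) \<le> Q m a * 1"
      using Q_nonneg[OF m, of a] by (intro mult_left_mono) auto
    then show ?thesis using Q_Suc[OF m, of a] by simp
  next
    case False
    then show ?thesis by (simp add: Q_def P_zero)
  qed
qed

lemma Q_le: assumes m: "m \<ge> 1" shows "Q m a \<le> Q m m"
proof (cases "a \<le> m")
  case True
  have "\<forall>a. a + d = m \<longrightarrow> Q m a \<le> Q m m" for d
  proof (induction d)
    case 0 then show ?case by simp
  next
    case (Suc d)
    show ?case
    proof (intro allI impI)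
      fix a assume "a + Suc d = m"
      then have "Q m (Suc a) \<le> Q m m" "a < m" using Suc by auto
      then show "Q m a \<le> Q m m" using Q_inc[OF m, of a] by linarith
    qed
  qed
  moreover have "a + (m - a) = m" using True by simp
  ultimately show ?thesis by blast
next
  case False
  have "Q m (m + d) \<le> Q m m" for d
  proof (induction d)
    case 0 then show ?case by simp
  next
    case (Suc d)
    then show ?case using Q_dec[OF m, of "m+d"] by simp
  qed
  moreover have "a = m + (a - m)" using False by simp
  ultimately show ?thesis by metis
qed

lemma ln_bound: assumes "1 \<le> t" shows "2*(t-1)/(t+1) \<le> ln (t::real)"
proof -
  let ?f = "\<lambda>t::real. ln t - 2*(t-1)/(t+1)"
  have d: "(?f has_real_derivative (1/x - 4/(x+1)^2)) (at x)" if "x \<ge> 1" for x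
    using that by (auto intro!: derivative_eq_intros simp: power2_eq_square field_simps)
  have "?f 1 \<le> ?f t"
  proof (rule DERIV_nonneg_imp_nondecreasing[OF assms])
    fix x assume x: "1 \<le> x" "x \<le> t"
    have "x > 0" "x + 1 > 0" using x by auto
    then have "x \<noteq> 0" "(x+1)^2 \<noteq> 0" by auto
    then have "1/x - 4/(x+1)^2 = (x-1)^2/(x*(x+1)^2)" by (simp add: divide_simps) (simp add: algebra_simps power2_eq_square)
    also have "\<dots> \<ge> 0" using x by simp
    finally show "\<exists>y. (?f has_real_derivative y) (at x) \<and> 0 \<le> y" using d x(1) by blast
  qed
  then show ?thesis by simp
qed

definition Phi :: "real \<Rightarrow> real" where "Phi x = x * ln x - x"

lemma step1: assumes "0 < u" "u \<le> v" shows "Phi v - Phi u \<le> (v-u) * ln v"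
proof -
  have "ln (v/u) \<le> v/u - 1" using assms by (intro ln_le_minus_one) simp
  moreover have "ln (v/u) = ln v - ln u" using assms by (simp add: ln_div)
  ultimately have "u * (ln v - ln u) \<le> u * (v/u - 1)" using assms by (intro mult_left_mono) auto
  moreover have "u * (v/u - 1) = v - u" using assms by (simp add: field_simps)
  moreover have "u * (ln v - ln u) = u * ln v - u * ln u" by (simp add: right_diff_distrib)
  ultimately have "u * ln v - u * ln u \<le> v - u" by simp
  then show ?thesis by (simp add: Phi_def algebra_simps)
qed

lemma step2: assumes "0 < u" "u \<le> v" shows "(v-u) * (ln u + ln v) / 2 \<le> Phi v - Phi u"
proof -
  define t where "t = v / u"
  have t: "1 \<le> t" using assms by (simp add: t_def)
  have v: "v = u * t" using assms by (simp add: t_def)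
  have lv: "ln v = ln u + ln t" using assms t by (simp add: v ln_mult)
  have "2*(t-1)/(t+1) \<le> ln t" by (rule ln_bound[OF t])
  then have "2*(t-1) \<le> (t+1) * ln t" using t by (simp add: field_simps)
  then have "u * (2*(t-1)) \<le> u * ((t+1) * ln t)" using assms by (intro mult_left_mono) auto
  have e: "2*(Phi v - Phi u) - (v-u) * (ln u + ln v) = u * ((t+1) * ln t) - u * (2*(t-1))"
    unfolding Phi_def lv by (simp add: v algebra_simps)
  have "(v-u) * (ln u + ln v) \<le> 2*(Phi v - Phi u)" using e \<open>u * (2*(t-1)) \<le> u * ((t+1) * ln t)\<close> by linarith
  then show ?thesis by simp
qed

definition L :: "nat \<Rightarrow> real" where "L m = (\<Sum>j<m. ln ((real m + real j + 1) / real m))"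

lemma Qmm: assumes "m \<ge> 1" shows "Q m m = exp (L m)"
proof -
  have "Q m m = (\<Prod>i<m. (2*real m - real i) / real m)"
    by (simp add: Q_def P_def prod_dividef)
  also have "\<dots> = (\<Prod>i<m. (\<lambda>j. (real m + real j + 1) / real m) (m - Suc i))"
    by (intro prod.cong) (auto simp: of_nat_diff)
  also have "\<dots> = (\<Prod>j<m. (real m + real j + 1) / real m)"
    by (rule prod.nat_diff_reindex)
  also have "\<dots> = exp (L m)" unfolding L_def using assms
    by (simp add: exp_sum exp_ln)
  finally show ?thesis .
qed

lemma L_bounds: assumes m: "m \<ge> 1"
  shows "real m * (2 * ln 2 - 1) \<le> L m" "L m \<le> real m * (2 * ln 2 - 1) + ln 2 / 2"
proof -
  define u where "u j = (real m + real j) / real m" for j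
  have mpos: "real m > 0" using m by simp
  have u0: "u 0 = 1" and um: "u m = 2" using mpos by (simp_all add: u_def)
  have upos: "u j > 0" for j using mpos by (simp add: u_def)
  have umono: "u j \<le> u (Suc j)" for j using mpos by (simp add: u_def divide_right_mono)
  have diff: "u (Suc j) - u j = 1 / real m" for j using mpos by (simp add: u_def field_simps)
  have Lu: "L m = (\<Sum>j<m. ln (u (Suc j)))" unfolding L_def u_def by (simp add: ac_simps)
  have tele: "(\<Sum>j<m. Phi (u (Suc j)) - Phi (u j)) = 2 * ln 2 - 1"
    using sum_lessThan_telescope[of "\<lambda>j. Phi (u j)" m] by (simp add: u0 um Phi_def)
  have "2 * ln 2 - 1 \<le> (\<Sum>j<m. (1 / real m) * ln (u (Suc j)))"
    unfolding tele[symmetric] by (intro sum_mono) (metis step1 upos umono diff)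
  also have "\<dots> = L m / real m" by (simp add: Lu sum_divide_distrib)
  finally show "real m * (2 * ln 2 - 1) \<le> L m" using mpos by (simp add: field_simps)
  have "(\<Sum>j<m. (1 / real m) * (ln (u j) + ln (u (Suc j))) / 2) \<le> 2 * ln 2 - 1"
    unfolding tele[symmetric] by (intro sum_mono) (metis step2 upos umono diff)
  moreover have "(\<Sum>j<m. (1 / real m) * (ln (u j) + ln (u (Suc j))) / 2)
      = (1 / real m) / 2 * ((\<Sum>j<m. ln (u (Suc j))) + (\<Sum>j<m. ln (u j)))"
    by (simp only: sum.distrib[symmetric] sum_distrib_left) (rule sum.cong; simp add: field_simps)
  moreover have "(\<Sum>j<m. ln (u (Suc j)) - ln (u j)) = ln 2"
    using sum_lessThan_telescope[of "\<lambda>j. ln (u j)" m] by (simp add: u0 um)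
  then have "(\<Sum>j<m. ln (u j)) = L m - ln 2" by (simp add: sum_subtractf Lu)
  ultimately have "(1 / real m) / 2 * ((\<Sum>j<m. ln (u (Suc j))) + (\<Sum>j<m. ln (u j))) \<le> 2 * ln 2 - 1"
    by linarith
  moreover have eq: "(\<Sum>j<m. ln (u (Suc j))) + (\<Sum>j<m. ln (u j)) = 2 * L m - ln 2"
    using Lu \<open>(\<Sum>j<m. ln (u j)) = L m - ln 2\<close> by linarith
  ultimately have h: "(1 / real m) / 2 * (2 * L m - ln 2) \<le> 2 * ln 2 - 1" by (simp only: eq)
  have "2 * real m * ((1 / real m) / 2 * (2 * L m - ln 2)) \<le> 2 * real m * (2 * ln 2 - 1)"
    using h mpos by (intro mult_left_mono) auto
  moreover have "2 * real m * ((1 / real m) / 2 * (2 * L m - ln 2)) = 2 * L m - ln 2" using mpos by simp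
  ultimately have "2 * L m - ln 2 \<le> 2 * real m * (2 * ln 2 - 1)" by linarith
  then show "L m \<le> real m * (2 * ln 2 - 1) + ln 2 / 2" by linarith
qed

lemma QQ: assumes "l \<ge> 1" "m \<ge> 1" shows "Q l l * Q m m \<le> 2 * Q (l+m) (l+m)"
proof -
  have "Q l l * Q m m = exp (L l + L m)" using assms by (simp add: Qmm exp_add)
  also have "\<dots> \<le> exp (real (l+m) * (2 * ln 2 - 1) + ln 2)"
    using L_bounds[OF assms(1)] L_bounds[OF assms(2)] by (simp add: distrib_right)
  also have "\<dots> = 2 * exp (real (l+m) * (2 * ln 2 - 1))" by (simp add: exp_add)
  also have "\<dots> \<le> 2 * Q (l+m) (l+m)"
    using L_bounds(1)[of "l+m"] assms by (simp add: Qmm)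
  finally show ?thesis .
qed

lemma choose_Q: "m \<ge> 1 \<Longrightarrow> real ((2*m) choose a) = Q m a * real m ^ a / fact a"
  by (simp add: choose_P Q_def)

theorem mainTheorem9:
  fixes n l k :: nat
  assumes "1 \<le> l" and "l \<le> n - 1" and "k \<le> n"
  shows "fixed_prob n l k / pmf (binomial_pmf n (real l / real n)) k \<le> 2"
proof -
  define m where "m = n - l"
  have l1: "l \<ge> 1" and m1: "m \<ge> 1" and n1: "n \<ge> 1" and nlm: "n = l + m"
    using assms by (auto simp: m_def)
  have n2: "2*n - 2*l = 2*m" by (simp add: m_def)
  have npos: "real n > 0" using n1 by simp
  have b: "real l / real n \<le> 1" "0 \<le> real l / real n" using nlm npos by auto
  have onem: "1 - real l / real n = real m / real n" using npos nlm by (simp add: field_simps)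
  define A where "A = Q l k" define B where "B = Q m (n-k)" define C where "C = Q n n"
  have Cpos: "C > 0" unfolding C_def using Qmm[OF n1] by simp
  have fp: "fixed_prob n l k = A * real l ^ k / fact k * (B * real m ^ (n-k) / fact (n-k))
      / (C * real n ^ n / fact n)"
    unfolding fixed_prob_def n2 A_def B_def C_def
    by (simp only: choose_Q[OF l1] choose_Q[OF m1] choose_Q[OF n1])
  have pm: "pmf (binomial_pmf n (real l / real n)) k
      = fact n / (fact k * fact (n-k)) * (real l ^ k / real n ^ k) * (real m ^ (n-k) / real n ^ (n-k))"
    using b assms(3) by (simp add: onem binomial_fact power_divide)
  have nn: "real n ^ n = real n ^ k * real n ^ (n-k)"
    using assms(3) by (simp add: power_add[symmetric])
  have ppos: "pmf (binomial_pmf n (real l / real n)) k > 0"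
    unfolding pm using npos l1 m1 by simp
  have eq: "fixed_prob n l k = pmf (binomial_pmf n (real l / real n)) k * (A * B / C)"
    unfolding fp pm nn using npos Cpos by (simp add: field_simps)
  have "A * B \<le> Q l l * Q m m"
    unfolding A_def B_def using Q_le[OF l1] Q_le[OF m1] Q_nonneg[OF l1] Q_nonneg[OF m1]
    by (meson mult_mono order_trans)
  also have "\<dots> \<le> 2 * C" unfolding C_def nlm using QQ[OF l1 m1] .
  finally have "A * B / C \<le> 2" using Cpos by (simp add: divide_le_eq)
  then show ?thesis using eq ppos by simp
qed

end
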